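(* Let $X$ be an extensible marked Dynkin diagram with $d$ nodes and let $n\ge d$ be such that $\det(X_n)\ne0$. Then $P(X_n)/Q(X_n)$ is a cyclic group generated by the class $[\overline{\omega}_1^{(n)}]$ of $\overline{\omega}_1^{(n)}=\omega_n^{(n)}$.
   Context: A marked Dynkin diagram $X$ has nodes $1,\dots,d$ with node $d$ distinguished and symmetrizable generalized Cartan matrix $C(X)$. For $n\ge d$, $X_n$ is obtained by attaching a simply-laced chain of new nodes $d+1,\dots,n$ to node $d$ (so $C(X_n)$ has $C(X)$ as upper-left block, $2$ on the remaining diagonal, $-1$ in positions $(i,i+1),(i+1,i)$ for $d\le i<n$, $0$ elsewhere). $\det(Y)$ is the determinant of the generalized Cartan matrix of $Y$. The sequence $\det(X_n)$, $n\ge d$, is arithmetic with common difference $\Delta$; $X$ is extensible if $\Delta\ne0$, $\det(X)\ne0$ and $\gcd(\Delta,\det X)=1$. For the Kac–Moody algebra $\mathfrak g(X_n)$: simple roots $\alpha_i^{(n)}$, simple coroots $\check\alpha_i^{(n)}$ with $\alpha_j^{(n)}(\check\alpha_i^{(n)})=C(X_n)_{ij}$; root lattice $Q(X_n)=\bigoplus_i\mathbb Z\alpha_i^{(n)}$; weight lattice $P(X_n)=\{\lambda\in\mathfrak h^*(X_n):\lambda(\check\alpha_i^{(n)})\in\mathbb Z\ \forall i\}$; fundamental weights $\omega_i^{(n)}$ with $\omega_i^{(n)}(\check\alpha_j^{(n)})=\delta_{ij}$. *)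

theory Defs
  imports "HOL-Combinatorics.Permutations" Complex_Main
begin

text \<open>Matrices are functions nat => nat => int, indexed by 1..m.\<close>

definition mat_det :: "(nat \<Rightarrow> nat \<Rightarrow> int) \<Rightarrow> nat \<Rightarrow> int" where
  "mat_det A m = (\<Sum>p | p permutes {1..m}. sign p * (\<Prod>i\<in>{1..m}. A i (p i)))"

definition symmetrizable_gcm :: "(nat \<Rightarrow> nat \<Rightarrow> int) \<Rightarrow> nat \<Rightarrow> bool" where
  "symmetrizable_gcm C d \<longleftrightarrow>
     (\<forall>i\<in>{1..d}. C i i = 2) \<and>
     (\<forall>i\<in>{1..d}. \<forall>j\<in>{1..d}. i \<noteq> j \<longrightarrow> C i j \<le> 0) \<and>
     (\<forall>i\<in>{1..d}. \<forall>j\<in>{1..d}. C i j = 0 \<longleftrightarrow> C j i = 0) \<and>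
     (\<exists>e :: nat \<Rightarrow> real. (\<forall>i\<in>{1..d}. e i > 0) \<and>
        (\<forall>i\<in>{1..d}. \<forall>j\<in>{1..d}. e i * of_int (C i j) = e j * of_int (C j i)))"

text \<open>Marked Dynkin diagram X: d >= 1 nodes, node d distinguished, GCM C.\<close>
definition marked_dynkin :: "(nat \<Rightarrow> nat \<Rightarrow> int) \<Rightarrow> nat \<Rightarrow> bool" where
  "marked_dynkin C d \<longleftrightarrow> d \<ge> 1 \<and> symmetrizable_gcm C d"

text \<open>Cartan matrix of X_n: attach a simply-laced chain d+1..n to node d
  (meaningful on indices 1..n).\<close>
definition ext_cartan :: "(nat \<Rightarrow> nat \<Rightarrow> int) \<Rightarrow> nat \<Rightarrow> nat \<Rightarrow> nat \<Rightarrow> int" where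
  "ext_cartan C d i j =
     (if i \<le> d \<and> j \<le> d then C i j
      else if i = j then 2
      else if (i + 1 = j \<or> j + 1 = i) \<and> d \<le> min i j then -1
      else 0)"

definition det_ext :: "(nat \<Rightarrow> nat \<Rightarrow> int) \<Rightarrow> nat \<Rightarrow> nat \<Rightarrow> int" where
  "det_ext C d n = mat_det (ext_cartan C d) n"

text \<open>Common difference of the arithmetic sequence det(X_n), n >= d.\<close>
definition delta :: "(nat \<Rightarrow> nat \<Rightarrow> int) \<Rightarrow> nat \<Rightarrow> int" where
  "delta C d = det_ext C d (d + 1) - det_ext C d d"

definition extensible :: "(nat \<Rightarrow> nat \<Rightarrow> int) \<Rightarrow> nat \<Rightarrow> bool" where
  "extensible C d \<longleftrightarrow> marked_dynkin C d \<and> delta C d \<noteq> 0 \<and> mat_det C d \<noteq> 0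
     \<and> gcd (delta C d) (mat_det C d) = 1"

text \<open>For a nonsingular Cartan matrix A of size m, h^* has basis the simple
  roots; an element lambda = sum_j c_j alpha_j is represented by its coordinate
  function c (supported on 1..m). Then
  lambda(coroot_i) = sum_j c_j alpha_j(coroot_i) = sum_j c_j A i j.\<close>
definition coroot_pairing :: "(nat \<Rightarrow> nat \<Rightarrow> int) \<Rightarrow> nat \<Rightarrow> (nat \<Rightarrow> complex) \<Rightarrow> nat \<Rightarrow> complex" where
  "coroot_pairing A m c i = (\<Sum>j\<in>{1..m}. c j * of_int (A i j))"

definition hdual :: "nat \<Rightarrow> (nat \<Rightarrow> complex) set" where
  "hdual m = {c. \<forall>j. j \<notin> {1..m} \<longrightarrow> c j = 0}"

definition weight_lattice :: "(nat \<Rightarrow> nat \<Rightarrow> int) \<Rightarrow> nat \<Rightarrow> (nat \<Rightarrow> complex) set" where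
  "weight_lattice A m = {c \<in> hdual m. \<forall>i\<in>{1..m}. coroot_pairing A m c i \<in> \<int>}"

definition root_lattice :: "nat \<Rightarrow> (nat \<Rightarrow> complex) set" where
  "root_lattice m = {c \<in> hdual m. \<forall>j\<in>{1..m}. c j \<in> \<int>}"

definition fund_weight :: "(nat \<Rightarrow> nat \<Rightarrow> int) \<Rightarrow> nat \<Rightarrow> nat \<Rightarrow> (nat \<Rightarrow> complex)" where
  "fund_weight A m k = (THE c. c \<in> hdual m \<and>
      (\<forall>i\<in>{1..m}. coroot_pairing A m c i = (if i = k then 1 else 0)))"

end

theory Submission
  imports Defs "Jordan_Normal_Form.Determinant"
begin


definition JM :: "(nat \<Rightarrow> nat \<Rightarrow> int) \<Rightarrow> nat \<Rightarrow> int mat" where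
  "JM B m = mat m m (\<lambda>(i,j). B (Suc i) (Suc j))"

lemma mat_det_JM: "mat_det B m = det (JM B m)"
proof -
  define jj where "jj = (\<lambda>(p::nat\<Rightarrow>nat) x. if x \<in> {1..m} then Suc (p (x-1)) else x)"
  define ii where "ii = (\<lambda>(q::nat\<Rightarrow>nat) x. if x \<in> {0..<m} then q (Suc x) - 1 else x)"
  have det: "det (JM B m) = (\<Sum>p\<in>{p. p permutes {0..<m}}. signof p * (\<Prod>i=0..<m. JM B m $$ (i, p i)))"
    by (rule det_def') (simp add: JM_def)
  have pj: "jj p permutes {1..m} \<and> sign (jj p) = sign p" if p: "p permutes {0..<m}" for p
  proof -
    interpret permutes_bij_finite p "{0..<m}" "{1..m}" Suc "\<lambda>x. x - 1" "jj p"
      proof unfold_locales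
      show "p permutes {0..<m}" by (rule p)
      show "bij_betw Suc {0..<m} {1..m}"
        by (simp add: bij_betw_def image_Suc_atLeastLessThan atLeastLessThanSuc_atLeastAtMost)
      show "x \<in> {0..<m} \<Longrightarrow> Suc x - 1 = x" for x by simp
      show "finite {0..<m}" by simp
    qed (rule eq_reflection, simp add: jj_def)
    show ?thesis using permutes_p' sign_p' by simp
  qed
  have "(\<Sum>p\<in>{p. p permutes {0..<m}}. signof p * (\<Prod>i=0..<m. JM B m $$ (i, p i))) = mat_det B m"
    unfolding mat_det_def
  proof (rule sum.reindex_bij_witness[where j = jj and i = ii and g = "\<lambda>p. signof p * (\<Prod>i=0..<m. JM B m $$ (i, p i))" and h = "\<lambda>p. sign p * (\<Prod>i\<in>{1..m}. B i (p i))"])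
    fix p assume "p \<in> {p. p permutes {0..<m}}"
    hence p: "p permutes {0..<m}" by simp
    have pin: "x < m \<Longrightarrow> p x < m" for x using permutes_in_image[OF p] by auto
    show "ii (jj p) = p"
    proof
      fix x show "ii (jj p) x = p x"
        using pin[of x] permutes_not_in[OF p, of x] by (auto simp: ii_def jj_def)
    qed
    show "jj p \<in> {p. p permutes {1..m}}" using pj[OF p] by simp
    have "(\<Prod>i\<in>{1..m}. B i (jj p i)) = (\<Prod>i\<in>Suc ` {0..<m}. B i (jj p i))"
      by (simp add: image_Suc_atLeastLessThan atLeastLessThanSuc_atLeastAtMost)
    also have "\<dots> = (\<Prod>i=0..<m. B (Suc i) (jj p (Suc i)))"
      by (subst prod.reindex) auto
    also have "\<dots> = (\<Prod>i=0..<m. JM B m $$ (i, p i))"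
      by (rule prod.cong) (auto simp: JM_def jj_def pin)
    finally show "sign (jj p) * (\<Prod>i\<in>{1..m}. B i (jj p i)) = signof p * (\<Prod>i=0..<m. JM B m $$ (i, p i))"
      using pj[OF p] by simp
  next
    fix q assume "q \<in> {p. p permutes {1..m}}"
    hence q: "q permutes {1..m}" by simp
    have qin: "1 \<le> x \<Longrightarrow> x \<le> m \<Longrightarrow> 1 \<le> q x \<and> q x \<le> m" for x using permutes_in_image[OF q] by auto
    show "jj (ii q) = q"
    proof
      fix x show "jj (ii q) x = q x"
        using qin[of x] permutes_not_in[OF q, of x] by (cases x) (auto simp: ii_def jj_def)
    qed
    interpret permutes_bij_finite q "{1..m}" "{0..<m}" "\<lambda>x. x - 1" Suc "ii q"
    proof unfold_locales
      show "q permutes {1..m}" by (rule q)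
      have "(\<lambda>x. x - 1) ` {1..m} = {0..<m}"
      proof
        show "(\<lambda>x. x - 1) ` {1..m} \<subseteq> {0..<m}" by auto
        show "{0..<m} \<subseteq> (\<lambda>x. x - 1) ` {1..m}"
        proof
          fix x assume "x \<in> {0..<m}" then show "x \<in> (\<lambda>x. x - 1) ` {1..m}"
            by (intro image_eqI[of _ _ "Suc x"]) auto
        qed
      qed
      then show "bij_betw (\<lambda>x. x - 1) {1..m} {0..<m}"
        by (auto simp: bij_betw_def inj_on_def)
      show "x \<in> {1..m} \<Longrightarrow> Suc (x - 1) = x" for x by simp
      show "finite {1..m}" by simp
    qed (rule eq_reflection, simp add: ii_def)
    show "ii q \<in> {p. p permutes {0..<m}}" using permutes_p' by simp
  qed
  thus ?thesis using det by simp

qed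

lemma sum_shift1: "(\<Sum>k\<in>{1..m}. f k) = (\<Sum>k=0..<m. f (Suc k))"
  by (induction m) (auto simp: atLeastLessThanSuc ac_simps)

lemma prod_shift1: "(\<Prod>k\<in>{1..m}. f k) = (\<Prod>k=0..<m. f (Suc k))"
  by (induction m) (auto simp: atLeastLessThanSuc ac_simps)

lemma JM_carrier[simp]: "JM B m \<in> carrier_mat m m" by (simp add: JM_def)

lemma JM_delete_last: "m \<ge> 1 \<Longrightarrow> mat_delete (JM B m) (m-1) (m-1) = JM B (m-1)"
  by (rule eq_matI) (auto simp: mat_delete_def JM_def)

lemma adj_exists:
  fixes B :: "nat \<Rightarrow> nat \<Rightarrow> int" and m :: nat
  shows "\<exists>adj::nat\<Rightarrow>nat\<Rightarrow>int.
    (\<forall>i\<in>{1..m}. \<forall>j\<in>{1..m}. (\<Sum>k\<in>{1..m}. B i k * adj k j) = (if i = j then mat_det B m else 0)) \<and>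
    (\<forall>i\<in>{1..m}. \<forall>j\<in>{1..m}. (\<Sum>k\<in>{1..m}. adj i k * B k j) = (if i = j then mat_det B m else 0)) \<and>
    (m \<ge> 1 \<longrightarrow> adj m m = mat_det B (m-1))"
proof -
  define J where "J = JM B m"
  define Ad where "Ad = adj_mat J"
  have J: "J \<in> carrier_mat m m" by (simp add: J_def)
  note A = adj_mat[OF J, folded Ad_def]
  define adj where "adj = (\<lambda>i j. Ad $$ (i - 1, j - 1))"
  have 1: "(\<Sum>k\<in>{1..m}. B i k * adj k j) = (if i = j then mat_det B m else 0)"
    if "i \<in> {1..m}" "j \<in> {1..m}" for i j
  proof -
    have "(J * Ad) $$ (i-1, j-1) = (det J \<cdot>\<^sub>m 1\<^sub>m m) $$ (i-1, j-1)" using A by simp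
    moreover have "(J * Ad) $$ (i-1, j-1) = (\<Sum>k=0..<m. J $$ (i-1, k) * Ad $$ (k, j-1))"
      using that J A(1) by (auto simp: scalar_prod_def index_mult_mat)
    moreover have "(det J \<cdot>\<^sub>m 1\<^sub>m m) $$ (i-1, j-1) = (if i = j then mat_det B m else 0)"
      using that by (auto simp: J_def mat_det_JM)
    moreover have "(\<Sum>k=0..<m. J $$ (i-1, k) * Ad $$ (k, j-1)) = (\<Sum>k\<in>{1..m}. B i k * adj k j)"
      unfolding sum_shift1 using that by (intro sum.cong) (auto simp: J_def JM_def adj_def)
    ultimately show ?thesis by simp
  qed
  have 2: "(\<Sum>k\<in>{1..m}. adj i k * B k j) = (if i = j then mat_det B m else 0)"
    if "i \<in> {1..m}" "j \<in> {1..m}" for i j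
  proof -
    have "(Ad * J) $$ (i-1, j-1) = (det J \<cdot>\<^sub>m 1\<^sub>m m) $$ (i-1, j-1)" using A by simp
    moreover have "(Ad * J) $$ (i-1, j-1) = (\<Sum>k=0..<m. Ad $$ (i-1, k) * J $$ (k, j-1))"
      using that J A(1) by (auto simp: scalar_prod_def index_mult_mat)
    moreover have "(det J \<cdot>\<^sub>m 1\<^sub>m m) $$ (i-1, j-1) = (if i = j then mat_det B m else 0)"
      using that by (auto simp: J_def mat_det_JM)
    moreover have "(\<Sum>k=0..<m. Ad $$ (i-1, k) * J $$ (k, j-1)) = (\<Sum>k\<in>{1..m}. adj i k * B k j)"
      unfolding sum_shift1 using that by (intro sum.cong) (auto simp: J_def JM_def adj_def)
    ultimately show ?thesis by simp
  qed
  have 3: "adj m m = mat_det B (m-1)" if "m \<ge> 1"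
  proof -
    have "adj m m = cofactor J (m-1) (m-1)"
      using that J by (simp add: adj_def Ad_def adj_mat_def)
    also have "\<dots> = det (JM B (m-1))"
      using that JM_delete_last[of m B] by (simp add: cofactor_def J_def)
    finally show ?thesis by (simp add: mat_det_JM)
  qed
  show ?thesis using 1 2 3 by blast
qed

lemma det_rec:
  fixes B :: "nat \<Rightarrow> nat \<Rightarrow> int"
  assumes m: "m = Suc (Suc k)" and d1: "B m m = 2" and d2: "B (m-1) m = -1" and d3: "B m (m-1) = -1"
    and z: "\<And>j. j \<in> {1..k} \<Longrightarrow> B m j = 0 \<and> B j m = 0"
  shows "mat_det B m = 2 * mat_det B (m-1) - mat_det B (m-2)"
proof -
  define J where "J = JM B m"
  have J: "J \<in> carrier_mat m m" by (simp add: J_def)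
  define N where "N = mat_delete J (Suc k) k"
  have N: "N \<in> carrier_mat (Suc k) (Suc k)" using J m by (simp add: N_def mat_delete_def)
  have Nent: "N $$ (i, k) = B (Suc i) m" if "i < Suc k" for i
    using that m by (simp add: N_def J_def JM_def mat_delete_def)
  have NN: "mat_delete N k k = JM B k"
    by (rule eq_matI) (auto simp: N_def J_def JM_def mat_delete_def m)
  have "det N = (\<Sum>i<Suc k. N $$ (i,k) * cofactor N i k)"
    by (rule laplace_expansion_column[OF N]) simp
  also have "\<dots> = N $$ (k,k) * cofactor N k k"
    using z m by (simp add: Nent)
  also have "\<dots> = - det (JM B k)"
    using Nent[of k] d2 m by (simp add: cofactor_def NN)
  finally have detN: "det N = - det (JM B k)" .
  have Jdel: "mat_delete J (Suc k) (Suc k) = JM B (Suc k)"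
    using JM_delete_last[of m B] m by (simp add: J_def)
  have "det J = (\<Sum>j<m. J $$ (Suc k, j) * cofactor J (Suc k) j)"
    by (rule laplace_expansion_row[OF J]) (simp add: m)
  also have "\<dots> = J $$ (Suc k, k) * cofactor J (Suc k) k + J $$ (Suc k, Suc k) * cofactor J (Suc k) (Suc k)"
    using z m by (simp add: J_def JM_def)
  also have "\<dots> = 2 * det (JM B (Suc k)) - det (JM B k)"
    using d1 d3 m detN Jdel by (simp add: J_def JM_def cofactor_def N_def)
  finally show ?thesis using m by (simp add: mat_det_JM J_def)
qed

lemma INV:
  fixes B adj :: "nat \<Rightarrow> nat \<Rightarrow> int"
  assumes adj: "\<forall>i\<in>{1..m}. \<forall>j\<in>{1..m}. (\<Sum>k\<in>{1..m}. adj i k * B k j) = (if i = j then D else 0)"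
    and c: "c \<in> hdual m" and j: "j \<in> {1..m}"
  shows "of_int D * c j = (\<Sum>k\<in>{1..m}. of_int (adj j k) * coroot_pairing B m c k)"
proof -
  have "(\<Sum>k\<in>{1..m}. of_int (adj j k) * coroot_pairing B m c k)
      = (\<Sum>k\<in>{1..m}. \<Sum>l\<in>{1..m}. of_int (adj j k) * (c l * of_int (B k l)))"
    by (simp add: coroot_pairing_def sum_distrib_left)
  also have "\<dots> = (\<Sum>l\<in>{1..m}. \<Sum>k\<in>{1..m}. c l * of_int (adj j k * B k l))"
    by (subst sum.swap) (simp add: algebra_simps)
  also have "\<dots> = (\<Sum>l\<in>{1..m}. c l * of_int (\<Sum>k\<in>{1..m}. adj j k * B k l))"
    by (simp add: sum_distrib_left)
  also have "\<dots> = (\<Sum>l\<in>{1..m}. c l * of_int (if j = l then D else 0))"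
    using adj j by (intro sum.cong) auto
  also have "\<dots> = of_int D * c j"
    using j by (simp add: if_distrib cong: if_cong)
  finally show ?thesis by simp
qed

lemma G:
  fixes B :: "nat \<Rightarrow> nat \<Rightarrow> int" and z :: "nat \<Rightarrow> complex"
  assumes m: "m \<ge> 1" and z: "z \<in> hdual m"
    and zp: "\<forall>i\<in>{1..m}. coroot_pairing B m z i \<in> \<int>"
    and zm: "z m \<in> \<int>"
    and ab: "a * mat_det B (m-1) + b * mat_det B m = 1"
  shows "\<forall>j\<in>{1..m}. z j \<in> \<int>"
proof
  fix j assume j: "j \<in> {1..m}"
  show "z j \<in> \<int>"
  proof (cases "j = m")
    case True then show ?thesis using zm by simp
  next
    case False
    hence j': "j \<in> {1..m-1}" using j by auto
    obtain adj where adj: "\<forall>i\<in>{1..m}. \<forall>j\<in>{1..m}. (\<Sum>k\<in>{1..m}. adj i k * B k j) = (if i = j then mat_det B m else 0)"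
      using adj_exists[of m B] by blast
    obtain adj' where adj': "\<forall>i\<in>{1..m-1}. \<forall>j\<in>{1..m-1}. (\<Sum>k\<in>{1..m-1}. adj' i k * B k j) = (if i = j then mat_det B (m-1) else 0)"
      using adj_exists[of "m-1" B] by blast
    have D: "of_int (mat_det B m) * z j \<in> \<int>"
      using INV[OF adj z j] zp by (auto intro!: Ints_sum Ints_mult)
    define z' where "z' = z(m := 0)"
    have z': "z' \<in> hdual (m-1)" using z m by (auto simp: hdual_def z'_def)
    have split: "{1..m} = insert m {1..m-1}" using m by auto
    have "coroot_pairing B (m-1) z' i \<in> \<int>" if i: "i \<in> {1..m-1}" for i
    proof -
      have "coroot_pairing B m z i = coroot_pairing B (m-1) z' i + z m * of_int (B i m)"
        unfolding coroot_pairing_def split using m by (subst sum.insert) (auto simp: z'_def intro!: sum.cong)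
      moreover have "coroot_pairing B m z i \<in> \<int>" using zp i by auto
      ultimately show ?thesis using zm
        by (metis Ints_diff Ints_mult Ints_of_int add_diff_cancel_right')
    qed
    hence "(\<Sum>k\<in>{1..m-1}. of_int (adj' j k) * coroot_pairing B (m-1) z' k) \<in> \<int>"
      by (auto intro!: Ints_sum Ints_mult)
    moreover have "z' j = z j" using False by (simp add: z'_def)
    ultimately have M: "of_int (mat_det B (m-1)) * z j \<in> \<int>"
      using INV[OF adj' z' j'] by simp
    have "z j = of_int a * (of_int (mat_det B (m-1)) * z j) + of_int b * (of_int (mat_det B m) * z j)"
    proof -
      have "(of_int a * of_int (mat_det B (m-1)) + of_int b * of_int (mat_det B m) :: complex) = 1"
        using arg_cong[OF ab, of "of_int :: int \<Rightarrow> complex"] by simp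
      then have "z j = (of_int a * of_int (mat_det B (m-1)) + of_int b * of_int (mat_det B m)) * z j"
        by simp
      also have "\<dots> = of_int a * (of_int (mat_det B (m-1)) * z j) + of_int b * (of_int (mat_det B m) * z j)"
        by (simp only: distrib_right mult.assoc)
      finally show ?thesis .
    qed
    also have "\<dots> \<in> \<int>"
      by (rule Ints_add[OF Ints_mult[OF Ints_of_int M] Ints_mult[OF Ints_of_int D]])
    finally show ?thesis .
  qed
qed

lemma mat_det_cong:
  assumes "\<forall>i\<in>{1..m}. \<forall>j\<in>{1..m}. B i j = B' i j"
  shows "mat_det B m = mat_det B' m"
  unfolding mat_det_def
proof (intro sum.cong refl arg_cong2[where f="(*)"] prod.cong)
  fix p i assume p: "p \<in> {p. p permutes {1..m}}" and i: "i \<in> {1..m}"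
  then have "p i \<in> {1..m}" using permutes_in_image[of p "{1..m}" i] by simp
  then show "B i (p i) = B' i (p i)" using assms i by blast
qed



theorem lemma3p1:
  fixes C :: "nat \<Rightarrow> nat \<Rightarrow> int" and d n :: nat
  assumes "extensible C d"
    and "n \<ge> d"
    and "det_ext C d n \<noteq> 0"
  shows "fund_weight (ext_cartan C d) n n \<in> weight_lattice (ext_cartan C d) n \<and>
    (\<forall>w\<in>weight_lattice (ext_cartan C d) n. \<exists>k::int.
        (\<lambda>x. w x - of_int k * fund_weight (ext_cartan C d) n n x) \<in> root_lattice n)"
proof -
  define A where "A = ext_cartan C d"
  from assms(1) have d1: "d \<ge> 1" and g: "gcd (delta C d) (mat_det C d) = 1"
    unfolding extensible_def marked_dynkin_def by auto
  define f where "f = (\<lambda>k. mat_det A k)"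
  define \<Delta> where "\<Delta> = delta C d"
  have fd: "f d = mat_det C d" unfolding f_def A_def
    by (rule mat_det_cong) (auto simp: ext_cartan_def)
  have rec: "f m = 2 * f (m-1) - f (m-2)" if "m \<ge> d+1" for m
  proof -
    have m: "m = Suc (Suc (m-2))" using that d1 by arith
    have c1: "A m m = 2" using that by (simp add: A_def ext_cartan_def)
    have c2: "A (m-1) m = -1" using that d1 by (auto simp: A_def ext_cartan_def min_def)
    have c3: "A m (m-1) = -1" using that d1 by (auto simp: A_def ext_cartan_def min_def)
    have c4: "A m j = 0 \<and> A j m = 0" if "j \<in> {1..m-2}" for j
    proof -
      have "Suc j \<noteq> m" "Suc m \<noteq> j" "j \<noteq> m" "\<not> m \<le> d" using that \<open>m \<ge> d+1\<close> by auto
      then show ?thesis by (simp add: A_def ext_cartan_def)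
    qed
    show ?thesis unfolding f_def
      by (rule det_rec[OF m c1 c2 c3 c4]) simp
  qed
  have step: "f (d+1+t) - f (d+t) = \<Delta>" for t
  proof (induction t)
    case 0 then show ?case by (simp add: \<Delta>_def delta_def det_ext_def f_def A_def)
  next
    case (Suc t)
    have "f (d+1+Suc t) = 2 * f (d+1+t) - f (d+t)" using rec[of "d+1+Suc t"] by simp
    then show ?case using Suc by simp
  qed
  have base: "f d - f (d-1) = \<Delta>"
    using rec[of "d+1"] step[of 0] d1 by simp
  have lin: "f (d+t) = f d + int t * \<Delta>" for t
  proof (induction t)
    case 0 then show ?case by simp
  next
    case (Suc t) then show ?case using step[of t] by (simp add: algebra_simps)
  qed
  obtain t where n: "n = d + t" using assms(2) le_Suc_ex by blast
  have fn1: "f n - f (n-1) = \<Delta>"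
  proof (cases t)
    case 0 then show ?thesis using base n by simp
  next
    case (Suc t') then show ?thesis using step[of t'] n by simp
  qed
  obtain u v where uv: "u * \<Delta> + v * mat_det C d = 1"
    using bezout_int[of \<Delta> "mat_det C d"] g \<Delta>_def by auto
  define a where "a = - u + v * int t"
  define b where "b = u + v - v * int t"
  have ab: "a * f (n-1) + b * f n = 1"
  proof -
    have e1: "f (n-1) = f n - \<Delta>" using fn1 by simp
    have e2: "f n = mat_det C d + int t * \<Delta>" using lin[of t] fd n by simp
    show ?thesis unfolding e1 a_def b_def using uv e2 by (simp add: algebra_simps)
  qed
  have n1: "n \<ge> 1" using n d1 by simp
  define Dn where "Dn = f n"
  have Dn0: "Dn \<noteq> 0" using assms(3) by (simp add: Dn_def f_def A_def det_ext_def)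
  obtain adj where adj1: "\<forall>i\<in>{1..n}. \<forall>j\<in>{1..n}. (\<Sum>k\<in>{1..n}. A i k * adj k j) = (if i = j then Dn else 0)"
     and adj2: "\<forall>i\<in>{1..n}. \<forall>j\<in>{1..n}. (\<Sum>k\<in>{1..n}. adj i k * A k j) = (if i = j then Dn else 0)"
     and adj3: "adj n n = f (n-1)"
    using adj_exists[of n A] n1 unfolding Dn_def f_def by blast
  define \<omega> where "\<omega> = (\<lambda>j. if j \<in> {1..n} then of_int (adj j n) / of_int Dn else (0::complex))"
  have \<omega>h: "\<omega> \<in> hdual n" by (simp add: \<omega>_def hdual_def)
  have \<omega>p: "coroot_pairing A n \<omega> i = (if i = n then 1 else 0)" if i: "i \<in> {1..n}" for i
  proof -
    have "coroot_pairing A n \<omega> i = (\<Sum>j\<in>{1..n}. of_int (A i j * adj j n) / of_int Dn)"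
      unfolding coroot_pairing_def by (intro sum.cong) (auto simp: \<omega>_def)
    also have "\<dots> = of_int (\<Sum>j\<in>{1..n}. A i j * adj j n) / of_int Dn"
      by (simp add: sum_divide_distrib)
    also have "\<dots> = (if i = n then 1 else 0)" using adj1 i n1 Dn0 by auto
    finally show ?thesis .
  qed
  have uniq: "c = \<omega>" if c: "c \<in> hdual n" and cp: "\<forall>i\<in>{1..n}. coroot_pairing A n c i = (if i = n then 1 else 0)" for c
  proof
    fix x show "c x = \<omega> x"
    proof (cases "x \<in> {1..n}")
      case True
      have "of_int Dn * c x = (\<Sum>k\<in>{1..n}. of_int (adj x k) * coroot_pairing A n c k)"
        by (rule INV[OF adj2 c True])
      also have "\<dots> = (\<Sum>k\<in>{1..n}. if k = n then of_int (adj x n) else 0)"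
        using cp by (intro sum.cong) auto
      also have "\<dots> = of_int (adj x n)" using n1 by simp
      finally show ?thesis using True Dn0 by (simp add: \<omega>_def field_simps)
    next
      case False
      have "\<omega> x = 0" unfolding \<omega>_def by (rule if_not_P[OF False])
      moreover have "c x = 0" using c False unfolding hdual_def by blast
      ultimately show ?thesis by simp
    qed
  qed
  have fw: "fund_weight A n n = \<omega>"
    unfolding fund_weight_def
  proof (rule the_equality)
    show "\<omega> \<in> hdual n \<and> (\<forall>i\<in>{1..n}. coroot_pairing A n \<omega> i = (if i = n then 1 else 0))"
      using \<omega>h \<omega>p by blast
    fix c assume "c \<in> hdual n \<and> (\<forall>i\<in>{1..n}. coroot_pairing A n c i = (if i = n then 1 else 0))"
    then show "c = \<omega>" using uniq by blast
  qed
  have \<omega>W: "\<omega> \<in> weight_lattice A n"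
    using \<omega>h \<omega>p by (simp add: weight_lattice_def)
  have main: "\<exists>k::int. (\<lambda>x. w x - of_int k * \<omega> x) \<in> root_lattice n" if w: "w \<in> weight_lattice A n" for w
  proof -
    have wh: "w \<in> hdual n" and wp: "\<forall>i\<in>{1..n}. coroot_pairing A n w i \<in> \<int>"
      using w by (auto simp: weight_lattice_def)
    have nn: "n \<in> {1..n}" using n1 by simp
    have "of_int Dn * w n \<in> \<int>"
      using INV[OF adj2 wh nn] wp by (auto intro!: Ints_sum Ints_mult)
    then obtain Y where Y: "of_int Dn * w n = of_int Y" by (auto elim: Ints_cases)
    define k where "k = Y * a"
    define z where "z = (\<lambda>x. w x - of_int k * \<omega> x)"
    have zh: "z \<in> hdual n" using wh \<omega>h by (simp add: z_def hdual_def)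
    have zp: "\<forall>i\<in>{1..n}. coroot_pairing A n z i \<in> \<int>"
    proof
      fix i assume i: "i \<in> {1..n}"
      have "coroot_pairing A n z i = coroot_pairing A n w i - of_int k * coroot_pairing A n \<omega> i"
        unfolding coroot_pairing_def z_def
        by (simp add: sum_subtractf sum_distrib_left algebra_simps)
      also have "\<dots> \<in> \<int>" using wp i \<omega>p[OF i] by auto
      finally show "coroot_pairing A n z i \<in> \<int>" .
    qed
    have zn: "z n \<in> \<int>"
    proof -
      have "z n = of_int (Y * b)"
      proof -
        have wn: "w n = of_int Y / of_int Dn" using Y Dn0 by (simp add: field_simps)
        have on: "\<omega> n = of_int (f (n-1)) / of_int Dn" using nn adj3 by (simp add: \<omega>_def)
        have abc: "(of_int a * of_int (f (n-1)) + of_int b * of_int Dn :: complex) = 1"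
          using arg_cong[OF ab, of "of_int :: int \<Rightarrow> complex"] by (simp add: Dn_def)
        have "z n = (of_int Y - of_int Y * of_int a * of_int (f (n-1))) / of_int Dn"
          unfolding z_def wn on k_def using Dn0 by (simp add: field_simps)
        also have "\<dots> = (of_int Y * (of_int a * of_int (f (n-1)) + of_int b * of_int Dn) - of_int Y * of_int a * of_int (f (n-1))) / of_int Dn"
          using abc by simp
        also have "\<dots> = of_int (Y * b)" using Dn0 by (simp add: field_simps)
        finally show ?thesis .
      qed
      then show ?thesis by simp
    qed
    have "\<forall>j\<in>{1..n}. z j \<in> \<int>"
      by (rule G[OF n1 zh zp zn, of a b]) (use ab in \<open>simp add: f_def Dn_def\<close>)
    then have "z \<in> root_lattice n" using zh by (simp add: root_lattice_def)
    then show ?thesis unfolding z_def by blast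
  qed
  show ?thesis using fw \<omega>W main unfolding A_def by auto
qed

end
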